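(* Let $Y$ be a variable. For all positive integers $n$, $$\det_{0\le i,j\le n-1}\left(Y+2^{-2\lceil(i+j+1)/2\rceil}\binom{2\lceil(i+j+1)/2\rceil}{\lceil(i+j+1)/2\rceil}\right)=(-1)^{\binom n2}2^{-n^2}\big(2\lceil n/2\rceil Y+1\big).$$ *)

theory Defs
  imports "HOL-Computational_Algebra.Polynomial" "Jordan_Normal_Form.Determinant"
begin

definition cb :: "nat \<Rightarrow> nat \<Rightarrow> real" where
  "cb i j = (let m = nat \<lceil>real (i + j + 1) / 2\<rceil>
             in real ((2 * m) choose m) / 2 ^ (2 * m))"

end

theory Submission
  imports Defs
begin

fun bt :: "nat \<Rightarrow> nat \<Rightarrow> real" where
  "bt 0 k = (if k = 0 then 1 else 0)"
| "bt (Suc i) k = (if k = 0 then 0 else bt i (k - 1)) + bt i (Suc k)"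

lemma bt_gt: "i < k \<Longrightarrow> bt i k = 0"
  by (induction i arbitrary: k) auto

lemma bt_diag: "bt i i = 1"
  by (induction i) (auto simp: bt_gt)

lemma bt_shift:
  assumes "Suc j < N"
  shows "(\<Sum>k<N. f k * bt (Suc j) k) = (\<Sum>k<N. bt j k * (f (Suc k) + (if k = 0 then 0 else f (k - 1))))"
proof -
  obtain N' where N: "N = Suc N'" using assms by (cases N) auto
  have jN: "j < N'" using assms N by auto
  have A: "(\<Sum>k<N. f k * (if k = 0 then 0 else bt j (k - 1))) = (\<Sum>k<N. bt j k * f (Suc k))"
  proof -
    have "(\<Sum>k<N. f k * (if k = 0 then 0 else bt j (k - 1))) = (\<Sum>k<N'. f (Suc k) * bt j k)"
      unfolding N sum.lessThan_Suc_shift by simp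
    also have "\<dots> = (\<Sum>k<N. bt j k * f (Suc k))"
      unfolding N sum.lessThan_Suc using bt_gt[OF jN] by (simp add: mult.commute)
    finally show ?thesis .
  qed
  have B: "(\<Sum>k<N. f k * bt j (Suc k)) = (\<Sum>k<N. bt j k * (if k = 0 then 0 else f (k - 1)))"
  proof -
    have "(\<Sum>k<N. bt j k * (if k = 0 then 0 else f (k - 1))) = (\<Sum>k<N'. bt j (Suc k) * f k)"
      unfolding N sum.lessThan_Suc_shift by simp
    also have "\<dots> = (\<Sum>k<N. f k * bt j (Suc k))"
      unfolding N sum.lessThan_Suc using bt_gt[of j "Suc N'"] jN by (simp add: mult.commute)
    finally show ?thesis by simp
  qed
  show ?thesis
    by (simp add: distrib_left distrib_right sum.distrib A B)
qed

lemma bt0_sum: "0 < N \<Longrightarrow> (\<Sum>k<N. bt 0 k * g k) = g 0"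
proof -
  assume "0 < N"
  have "(\<Sum>k<N. bt 0 k * g k) = (\<Sum>k<N. if k = 0 then g k else 0)" by (rule sum.cong) auto
  then show ?thesis using \<open>0 < N\<close> by simp
qed

lemma bt_hankel: "i < N \<Longrightarrow> (\<Sum>k<N. bt i k * bt j k) = bt (i + j) 0"
proof (induction i arbitrary: j)
  case 0
  then show ?case using bt0_sum[of N] by simp
next
  case (Suc i)
  have "(\<Sum>k<N. bt (Suc i) k * bt j k) = (\<Sum>k<N. bt j k * bt (Suc i) k)"
    by (simp add: mult.commute)
  also have "\<dots> = (\<Sum>k<N. bt i k * bt (Suc j) k)"
    using bt_shift[OF Suc.prems, of "bt j"] by (simp add: add.commute)
  also have "\<dots> = bt (i + Suc j) 0" using Suc.IH[of "Suc j"] Suc.prems by (simp del: bt.simps)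
  finally show ?case by (simp del: bt.simps)
qed


lemma bt_lin: "i < N \<Longrightarrow> (\<Sum>k<N. bt i k * (real k + 1)) = 2 ^ i"
proof (induction i)
  case 0
  then show ?case using bt0_sum[of N] by simp
next
  case (Suc i)
  have "(\<Sum>k<N. bt (Suc i) k * (real k + 1)) = (\<Sum>k<N. (real k + 1) * bt (Suc i) k)"
    by (simp add: mult.commute)
  also have "\<dots> = (\<Sum>k<N. bt i k * (real (Suc k) + 1 + (if k = 0 then 0 else real (k - 1) + 1)))"
    using bt_shift[OF Suc.prems, of "\<lambda>k. real k + 1"] by (simp del: bt.simps)
  also have "\<dots> = (\<Sum>k<N. bt i k * (2 * (real k + 1)))"
    by (rule sum.cong) (auto simp: of_nat_diff)
  also have "\<dots> = 2 * (\<Sum>k<N. bt i k * (real k + 1))"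
    by (simp add: sum_distrib_left algebra_simps del: bt.simps)
  finally show ?case using Suc by (simp del: bt.simps)
qed

definition rho :: "nat \<Rightarrow> real" where
  "rho k = (if even k then (-1) ^ (k div 2) else 0)"

lemma rho_step: "rho (Suc k) + (if k = 0 then 0 else rho (k - 1)) = 0"
proof (cases "even k")
  case True
  then show ?thesis by (auto simp: rho_def)
next
  case False
  then obtain m where k: "k = Suc (2 * m)" by (metis oddE Suc_eq_plus1)
  show ?thesis unfolding k rho_def by simp
qed

lemma bt_rho: "j < N \<Longrightarrow> (\<Sum>k<N. rho k * bt j k) = (if j = 0 then 1 else 0)"
proof (cases j)
  case 0
  assume "j < N"
  then show ?thesis using bt0_sum[of N rho] 0 by (simp add: mult.commute rho_def)
next
  case (Suc j')
  assume "j < N"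
  have "(\<Sum>k<N. rho k * bt j k) = (\<Sum>k<N. bt j' k * (rho (Suc k) + (if k = 0 then 0 else rho (k - 1))))"
    unfolding Suc using bt_shift[of j' N rho] \<open>j < N\<close> Suc by (simp del: bt.simps)
  also have "\<dots> = 0" by (simp add: rho_step del: bt.simps)
  finally show ?thesis using Suc by simp
qed

lemma bt_parity: "odd (i + k) \<Longrightarrow> bt i k = 0"
proof (induction i arbitrary: k)
  case 0
  then show ?case by (cases k) auto
next
  case (Suc i)
  show ?case using Suc.prems Suc.IH[of "k - 1"] Suc.IH[of "Suc k"] by (cases k) auto
qed

definition D :: "nat \<Rightarrow> nat \<Rightarrow> real" where
  "D i r = real (i choose r) - (if r = 0 then 0 else real (i choose (r - 1)))"

lemma D_pascal: "D (Suc i) (Suc r) = D i (Suc r) + D i r"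
  by (cases r) (auto simp: D_def)

lemma D_zero: "2 * r = Suc i \<Longrightarrow> D i r = 0"
proof -
  assume h: "2 * r = Suc i"
  then obtain r' where r: "r = Suc r'" by (cases r) auto
  have "i choose r = i choose (i - r)" using h by (intro binomial_symmetric) auto
  moreover have "i - r = r'" using h r by auto
  ultimately show ?thesis unfolding D_def r by simp
qed

lemma bt_closed: "2 * r \<le> i \<Longrightarrow> bt i (i - 2 * r) = D i r"
proof (induction i arbitrary: r)
  case 0
  then show ?case by (simp add: D_def)
next
  case (Suc i)
  show ?case
  proof (cases r)
    case 0
    then show ?thesis using bt_diag[of i] bt_gt[of i "Suc (Suc i)"] by (simp add: D_def)
  next
    case (Suc r')
    have e1: "bt i (Suc (Suc i - 2 * r)) = D i r'"
    proof -
      have "Suc (Suc i - 2 * r) = i - 2 * r'" using Suc \<open>2 * r \<le> Suc i\<close> by auto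
      then show ?thesis using Suc.IH[of r'] Suc \<open>2 * r \<le> Suc i\<close> by simp
    qed
    show ?thesis
    proof (cases "2 * r = Suc i")
      case True
      then have "Suc i - 2 * r = 0" by simp
      then show ?thesis using e1 D_pascal[of i r'] D_zero[OF True] Suc by simp
    next
      case False
      then have le: "2 * r \<le> i" using Suc.prems by simp
      then have "Suc i - 2 * r \<noteq> 0" "Suc i - 2 * r - 1 = i - 2 * r" by auto
      then show ?thesis using e1 D_pascal[of i r'] Suc.IH[OF le] Suc by simp
    qed
  qed
qed

definition cc :: "nat \<Rightarrow> real" where
  "cc k = (let m = k div 2 + 1 in real ((2 * m) choose m) / 2 ^ (2 * m))"

lemma binom_rel: "(2 * t + 4) choose (t + 2) = 2 * ((2 * t + 2) choose (t + 1)) + 2 * ((2 * t + 2) choose t)"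
proof -
  have s: "(2 * t + 2) choose (t + 2) = (2 * t + 2) choose t"
    using binomial_symmetric[of t "2 * t + 2"] by (simp add: numeral_eq_Suc)
  have "(2 * t + 4) choose (t + 2) = ((2 * t + 3) choose (t + 1)) + ((2 * t + 3) choose (t + 2))"
    by (simp add: numeral_eq_Suc)
  also have "\<dots> = (((2 * t + 2) choose t) + ((2 * t + 2) choose (t + 1))) + (((2 * t + 2) choose (t + 1)) + ((2 * t + 2) choose (t + 2)))"
    by (simp add: numeral_eq_Suc)
  finally show ?thesis using s by simp
qed

lemma cc_step: "cc (Suc i) = cc i - bt i 1 / 2 ^ (i + 2)"
proof (cases "even i")
  case True
  then have "bt i 1 = 0" by (intro bt_parity) auto
  moreover have "Suc i div 2 = i div 2" using True by presburger
  ultimately show ?thesis by (simp add: cc_def)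
next
  case False
  then obtain t where i: "i = 2 * t + 1" by (metis oddE)
  have "bt i 1 = bt (Suc i) 0" by simp
  also have "\<dots> = D (2 * t + 2) (t + 1)" using bt_closed[of "t + 1" "Suc i"] i by (simp del: bt.simps)
  finally have b: "bt i 1 = real ((2 * t + 2) choose (t + 1)) - real ((2 * t + 2) choose t)"
    by (simp add: D_def)
  have r: "real ((2 * t + 4) choose (t + 2)) = 2 * real ((2 * t + 2) choose (t + 1)) + 2 * real ((2 * t + 2) choose t)"
    using binom_rel[of t] by (metis of_nat_add of_nat_mult of_nat_numeral)
  have d1: "Suc i div 2 + 1 = t + 2" using i by presburger
  have d0: "i div 2 + 1 = t + 1" using i by presburger
  have c1: "cc (Suc i) = real ((2 * t + 4) choose (t + 2)) / 2 ^ (2 * t + 4)"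
  proof -
    have e: "2 * (t + 2) = 2 * t + 4" by simp
    show ?thesis unfolding cc_def Let_def d1 e ..
  qed
  have c0: "cc i = real ((2 * t + 2) choose (t + 1)) / 2 ^ (2 * t + 2)"
  proof -
    have e: "2 * (t + 1) = 2 * t + 2" by simp
    show ?thesis unfolding cc_def Let_def d0 e ..
  qed
  have p: "(2::real) ^ (i + 2) = 2 ^ (2 * t + 2) * 2" "(2::real) ^ (2 * t + 4) = 2 ^ (2 * t + 2) * 4"
    unfolding i by (simp_all add: power_add)
  have aux: "\<And>P A B::real. P > 0 \<Longrightarrow> (2*A + 2*B)/(P*4) = A/P - (A - B)/(P*2)"
    by (simp add: field_simps)
  have Pp: "(2::real) ^ (2 * t + 2) > 0" by simp
  show ?thesis unfolding c1 c0 b p r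
    by (rule aux[OF Pp])
qed

definition g :: "nat \<Rightarrow> real" where "g k = (if k = 0 then 1 / 2 else 1)"

lemma bt_const: "i < N \<Longrightarrow> (\<Sum>k<N. bt i k * g k) = 2 ^ i * cc i"
proof (induction i)
  case 0
  then show ?case using bt0_sum[of N g] by (simp add: g_def cc_def)
next
  case (Suc i)
  have "(\<Sum>k<N. bt (Suc i) k * g k) = (\<Sum>k<N. g k * bt (Suc i) k)"
    by (simp add: mult.commute)
  also have "\<dots> = (\<Sum>k<N. bt i k * (g (Suc k) + (if k = 0 then 0 else g (k - 1))))"
    using bt_shift[OF Suc.prems, of g] by (simp del: bt.simps)
  also have "\<dots> = (\<Sum>k<N. 2 * (bt i k * g k) - (if k = 1 then bt i k / 2 else 0))"
  proof (rule sum.cong[OF refl])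
    fix k
    show "bt i k * (g (Suc k) + (if k = 0 then 0 else g (k - 1))) = 2 * (bt i k * g k) - (if k = 1 then bt i k / 2 else 0)"
      by (cases k) (simp_all add: g_def del: bt.simps)
  qed
  also have "\<dots> = 2 * (\<Sum>k<N. bt i k * g k) - bt i 1 / 2"
  proof -
    have "(\<Sum>k<N. (if k = 1 then bt i k / 2 else 0)) = bt i 1 / 2"
      using Suc.prems by (simp add: sum.delta' del: bt.simps)
    then show ?thesis by (simp add: sum_subtractf sum_distrib_left del: bt.simps)
  qed
  finally have "(\<Sum>k<N. bt (Suc i) k * g k) = 2 * (2 ^ i * cc i) - bt i 1 / 2"
    using Suc by (simp del: bt.simps)
  moreover have "(2::real) ^ Suc i * cc (Suc i) = 2 * (2 ^ i * cc i) - bt i 1 / 2"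
  proof -
    have e: "(2::real) ^ (i + 2) = 2 ^ Suc i * 2" by simp
    have "(2::real) ^ Suc i * cc (Suc i) = 2 ^ Suc i * cc i - 2 ^ Suc i * (bt i 1 / (2 ^ Suc i * 2))"
      unfolding cc_step e by (simp add: right_diff_distrib del: bt.simps)
    also have "\<dots> = 2 * (2 ^ i * cc i) - bt i 1 / 2" by (simp del: bt.simps)
    finally show ?thesis .
  qed
  ultimately show ?case by simp
qed

lemma sum_pCons2: "(\<Sum>k\<in>A. [:x k, y k:]) = [:(\<Sum>k\<in>A. x k), (\<Sum>k\<in>A. y k):]"
proof -
  have "coeff (\<Sum>k\<in>A. [:x k, y k:]) m = coeff [:(\<Sum>k\<in>A. x k), (\<Sum>k\<in>A. y k):] m" for m
    unfolding coeff_sum by (cases m; cases "m - 1") (auto simp: coeff_pCons split: nat.splits)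
  then show ?thesis by (simp add: poly_eq_iff)
qed

lemma sum_const_poly: "(\<Sum>k\<in>A. [:x k:]) = [:(\<Sum>k\<in>A. x k):]"
  using sum_pCons2[of x "\<lambda>_. 0" A] by simp

lemma prod_const_poly: "(\<Prod>k\<in>A. [:x k:]) = [:(\<Prod>k\<in>A. x k):]"
  by (induction A rule: infinite_finite_induct) (auto simp: one_pCons mult.commute)

lemma const_mult_lin: "[:a:] * [:b, c:] = [:a * b, a * c:]"
  by (simp add: mult.commute)

lemma mat_mult_entry: "i < n \<Longrightarrow> j < n \<Longrightarrow>
   (mat n n f * mat n n h) $$ (i, j) = (\<Sum>k<n. f (i, k) * h (k, j))"
  by (simp add: scalar_prod_def atLeast0LessThan)

lemma ceil_half: "nat \<lceil>real (k + 1) / 2\<rceil> = k div 2 + 1"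
proof -
  have "\<lceil>real (k + 1) / 2\<rceil> = int (k div 2 + 1)"
  proof (rule ceiling_unique)
    show "real_of_int (int (k div 2 + 1)) - 1 < real (k + 1) / 2"
      by (cases "even k") (auto elim!: evenE oddE simp: field_simps)
    show "real (k + 1) / 2 \<le> real_of_int (int (k div 2 + 1))"
      by (cases "even k") (auto elim!: evenE oddE simp: field_simps)
  qed
  then show ?thesis by simp
qed

lemma cb_cc: "cb i j = cc (i + j)"
  unfolding cb_def cc_def Let_def ceil_half ..

definition Mm :: "nat \<Rightarrow> real poly mat" where
  "Mm n = mat n n (\<lambda>(i, j). [: cb i j, 1 :])"
definition Uc :: "nat \<Rightarrow> real poly mat" where
  "Uc n = mat n n (\<lambda>(k, j). if k = j then 1 else if Suc k = j then -1 else 0)"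
definition Sd :: "nat \<Rightarrow> real poly mat" where
  "Sd n = mat n n (\<lambda>(i, j). if i = j then [: 1 / 2 ^ i :] else 0)"
definition Bt :: "nat \<Rightarrow> real poly mat" where
  "Bt n = mat n n (\<lambda>(i, k). [: bt i k :])"
definition Wm :: "nat \<Rightarrow> real poly mat" where
  "Wm n = mat n n (\<lambda>(k, j). if j = 0 then [: g k, real k + 1 :] else [: - bt j k / 2 ^ (j + 1) :])"
definition Em :: "nat \<Rightarrow> real poly mat" where
  "Em n = mat n n (\<lambda>(i, k). if i = 0 then [: rho k :] else if i = k then 1 else 0)"
definition dd :: "nat \<Rightarrow> real poly" where
  "dd n = [: (\<Sum>k<n. rho k * g k), (\<Sum>k<n. rho k * (real k + 1)) :]"
definition Wp :: "nat \<Rightarrow> real poly mat" where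
  "Wp n = mat n n (\<lambda>(i, j). if i = 0 then (if j = 0 then dd n else 0)
      else (if j = 0 then [: g i, real i + 1 :] else [: - bt j i / 2 ^ (j + 1) :]))"

lemma sum_diff_col: "j < n \<Longrightarrow>
  (\<Sum>k<n. f k * (if k = j then 1 else if Suc k = j then -1 else (0::real poly))) = f j - (if j = 0 then 0 else f (j - 1))"
proof -
  assume j: "j < n"
  have "(\<Sum>k<n. f k * (if k = j then 1 else if Suc k = j then -1 else (0::real poly)))
      = (\<Sum>k<n. (if k = j then f k else 0) + (if j \<noteq> 0 \<and> k = j - 1 then - f k else 0))"
    by (rule sum.cong) auto
  also have "\<dots> = f j - (if j = 0 then 0 else f (j - 1))"
    using j by (simp add: sum.distrib sum.delta)
  finally show ?thesis .
qed

lemma BW_entry: "i < n \<Longrightarrow> j < n \<Longrightarrow> (Bt n * Wm n) $$ (i, j) =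
   (if j = 0 then [: 2 ^ i * cc i, 2 ^ i :] else [: - bt (i + j) 0 / 2 ^ (j + 1) :])"
proof -
  assume i: "i < n" and j: "j < n"
  have "(Bt n * Wm n) $$ (i, j) = (\<Sum>k<n. [: bt i k :] * (if j = 0 then [: g k, real k + 1 :] else [: - bt j k / 2 ^ (j + 1) :]))"
    unfolding Bt_def Wm_def mat_mult_entry[OF i j] by simp
  also have "\<dots> = (if j = 0 then [: 2 ^ i * cc i, 2 ^ i :] else [: - bt (i + j) 0 / 2 ^ (j + 1) :])"
  proof (cases "j = 0")
    case True
    have "(\<Sum>k<n. [: bt i k :] * [: g k, real k + 1 :]) = [: (\<Sum>k<n. bt i k * g k), (\<Sum>k<n. bt i k * (real k + 1)) :]"
      unfolding const_mult_lin sum_pCons2 ..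
    also have "\<dots> = [: 2 ^ i * cc i, 2 ^ i :]" using bt_const[OF i] bt_lin[OF i] by simp
    finally show ?thesis using True by simp
  next
    case False
    have "(\<Sum>k<n. [: bt i k :] * [: - bt j k / 2 ^ (j + 1) :]) = [: (\<Sum>k<n. bt i k * bt j k) * (- 1 / 2 ^ (j + 1)) :]"
      unfolding sum_distrib_right by (simp add: sum_const_poly mult.commute)
    also have "\<dots> = [: - bt (i + j) 0 / 2 ^ (j + 1) :]" using bt_hankel[OF i] by simp
    finally show ?thesis using False by simp
  qed
  finally show ?thesis .
qed

lemma L1: "Mm n * Uc n = Sd n * (Bt n * Wm n)"
proof (rule eq_matI)
  show "dim_row (Mm n * Uc n) = dim_row (Sd n * (Bt n * Wm n))" by (simp add: Mm_def Sd_def)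
  show "dim_col (Mm n * Uc n) = dim_col (Sd n * (Bt n * Wm n))" by (simp add: Uc_def Wm_def)
  fix i j assume "i < dim_row (Sd n * (Bt n * Wm n))" "j < dim_col (Sd n * (Bt n * Wm n))"
  then have i: "i < n" and j: "j < n" by (auto simp: Sd_def Wm_def)
  have lhs: "(Mm n * Uc n) $$ (i, j) = [: cb i j, 1 :] - (if j = 0 then 0 else [: cb i (j - 1), 1 :])"
    unfolding Mm_def Uc_def mat_mult_entry[OF i j] using sum_diff_col[OF j, of "\<lambda>k. [: cb i k, 1 :]"] by simp
  have "(Sd n * (Bt n * Wm n)) $$ (i, j) = (\<Sum>l<n. (if i = l then [: 1 / 2 ^ i :] else 0) * (Bt n * Wm n) $$ (l, j))"
    using i j by (simp add: Sd_def Bt_def Wm_def scalar_prod_def atLeast0LessThan)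
  also have "\<dots> = (\<Sum>l<n. if l = i then [: 1 / 2 ^ i :] * (Bt n * Wm n) $$ (l, j) else 0)"
    by (rule sum.cong) auto
  also have "\<dots> = [: 1 / 2 ^ i :] * (Bt n * Wm n) $$ (i, j)"
    using i by (subst sum.delta) auto
  also have "\<dots> = (if j = 0 then [: cc i, 1 :] else [: - bt (i + j) 0 / 2 ^ (i + j + 1) :])"
    using i j by (simp add: BW_entry power_add)
  finally have rhs: "(Sd n * (Bt n * Wm n)) $$ (i, j) = (if j = 0 then [: cc i, 1 :] else [: - bt (i + j) 0 / 2 ^ (i + j + 1) :])" .
  show "(Mm n * Uc n) $$ (i, j) = (Sd n * (Bt n * Wm n)) $$ (i, j)"
  proof (cases j)
    case 0
    then show ?thesis unfolding lhs rhs by (simp add: cb_cc)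
  next
    case (Suc j')
    have cs: "cc (i + j) = cc (i + j') - bt (i + j') 1 / 2 ^ (i + j + 1)"
      using cc_step[of "i + j'"] Suc by simp
    have "bt (i + j') 1 = bt (i + j) 0" using Suc by simp
    then show ?thesis unfolding lhs rhs using Suc cs by (simp add: cb_cc)
  qed
qed

lemma L2: "Em n * Wm n = Wp n"
proof (rule eq_matI)
  show "dim_row (Em n * Wm n) = dim_row (Wp n)" by (simp add: Em_def Wp_def)
  show "dim_col (Em n * Wm n) = dim_col (Wp n)" by (simp add: Wm_def Wp_def)
  fix i j assume "i < dim_row (Wp n)" "j < dim_col (Wp n)"
  then have i: "i < n" and j: "j < n" by (auto simp: Wp_def)
  have e: "(Em n * Wm n) $$ (i, j) = (\<Sum>k<n. (if i = 0 then [: rho k :] else if i = k then 1 else 0) *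
      (if j = 0 then [: g k, real k + 1 :] else [: - bt j k / 2 ^ (j + 1) :]))"
    unfolding Em_def Wm_def mat_mult_entry[OF i j] by simp
  show "(Em n * Wm n) $$ (i, j) = Wp n $$ (i, j)"
  proof (cases "i = 0")
    case True
    show ?thesis
    proof (cases "j = 0")
      case True
      have "(\<Sum>k<n. [: rho k :] * [: g k, real k + 1 :]) = dd n"
        unfolding const_mult_lin sum_pCons2 dd_def ..
      then show ?thesis using \<open>i = 0\<close> True e i j by (simp add: Wp_def)
    next
      case False
      have "(\<Sum>k<n. [: rho k :] * [: - bt j k / 2 ^ (j + 1) :]) = [: (\<Sum>k<n. rho k * bt j k) * (- 1 / 2 ^ (j + 1)) :]"
        unfolding sum_distrib_right by (simp add: sum_const_poly mult.commute)
      also have "\<dots> = 0" using bt_rho[OF j] False by simp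
      finally show ?thesis using \<open>i = 0\<close> False e i j by (simp add: Wp_def)
    qed
  next
    case False
    have "(Em n * Wm n) $$ (i, j) = (\<Sum>k<n. if k = i then (if j = 0 then [: g k, real k + 1 :] else [: - bt j k / 2 ^ (j + 1) :]) else 0)"
      unfolding e by (rule sum.cong) (use False in auto)
    also have "\<dots> = (if j = 0 then [: g i, real i + 1 :] else [: - bt j i / 2 ^ (j + 1) :])"
      using i by (subst sum.delta) auto
    finally show ?thesis using False i j by (simp add: Wp_def)
  qed
qed

lemma det_Uc: "det (Uc n) = 1"
proof -
  have "det (Uc n) = prod_list (diag_mat (Uc n))"
    by (rule det_upper_triangular[of _ n]) (auto simp: upper_triangular_def Uc_def)
  also have "\<dots> = 1" unfolding prod_list_diag_prod by (simp add: Uc_def)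
  finally show ?thesis .
qed

lemma det_Em: "det (Em n) = 1"
proof -
  have "det (Em n) = prod_list (diag_mat (Em n))"
    by (rule det_upper_triangular[of _ n]) (auto simp: upper_triangular_def Em_def)
  also have "\<dots> = 1" unfolding prod_list_diag_prod by (rule prod.neutral) (auto simp: Em_def rho_def)
  finally show ?thesis .
qed

lemma det_Bt: "det (Bt n) = 1"
proof -
  have "det (Bt n) = prod_list (diag_mat (Bt n))"
    by (rule det_lower_triangular[of n]) (auto simp: Bt_def bt_gt)
  also have "\<dots> = 1" unfolding prod_list_diag_prod by (rule prod.neutral) (auto simp: Bt_def bt_diag)
  finally show ?thesis .
qed

lemma det_Sd: "det (Sd n) = [: \<Prod>i<n. 1 / 2 ^ i :]"
proof -
  have "det (Sd n) = prod_list (diag_mat (Sd n))"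
    by (rule det_upper_triangular[of _ n]) (auto simp: upper_triangular_def Sd_def)
  also have "\<dots> = (\<Prod>i<n. [: 1 / 2 ^ i :])" unfolding prod_list_diag_prod
    by (simp add: Sd_def atLeast0LessThan)
  finally show ?thesis by (simp add: prod_const_poly)
qed

lemma det_Wp: assumes "n = Suc m" shows "det (Wp n) = dd n * [: \<Prod>j<m. - 1 / 2 ^ (j + 2) :]"
proof -
  have W: "Wp n \<in> carrier_mat n n" by (simp add: Wp_def)
  have "det (Wp n) = (\<Sum>j<n. Wp n $$ (0, j) * cofactor (Wp n) 0 j)"
    by (rule laplace_expansion_row[OF W]) (simp add: assms)
  also have "\<dots> = (\<Sum>j<n. if j = 0 then dd n * cofactor (Wp n) 0 j else 0)"
    by (rule sum.cong) (auto simp: Wp_def)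
  also have "\<dots> = dd n * cofactor (Wp n) 0 0" using assms by (subst sum.delta) auto
  also have "cofactor (Wp n) 0 0 = det (mat_delete (Wp n) 0 0)" by (simp add: cofactor_def)
  also have "mat_delete (Wp n) 0 0 = mat m m (\<lambda>(i, j). [: - bt (Suc j) (Suc i) / 2 ^ (j + 2) :])"
    by (rule eq_matI) (auto simp: mat_delete_def Wp_def assms)
  also have "det \<dots> = prod_list (diag_mat (mat m m (\<lambda>(i, j). [: - bt (Suc j) (Suc i) / 2 ^ (j + 2) :])))"
    by (rule det_upper_triangular[of _ m]) (auto simp: upper_triangular_def bt_gt)
  also have "\<dots> = (\<Prod>j<m. [: - 1 / 2 ^ (j + 2) :])" unfolding prod_list_diag_prod
    by (simp add: bt_diag atLeast0LessThan del: bt.simps)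
  finally show ?thesis by (simp add: prod_const_poly)
qed

lemma rho_sums: "(\<Sum>k<2*m+1. rho k * g k) = (-1)^m / 2 \<and> (\<Sum>k<2*m+1. rho k * (real k + 1)) = (-1)^m * (real m + 1)"
proof (induction m)
  case 0
  then show ?case by (simp add: rho_def g_def)
next
  case (Suc m)
  have e: "2 * Suc m + 1 = Suc (Suc (2 * m + 1))" by simp
  have r1: "rho (2 * m + 1) = 0" by (simp add: rho_def)
  have r2: "rho (Suc (2 * m + 1)) = - ((-1) ^ m)" by (simp add: rho_def)
  have g2: "g (Suc (2 * m + 1)) = 1" by (simp add: g_def)
  show ?case unfolding e sum.lessThan_Suc using Suc r1 r2 g2 by (simp add: field_simps)
qed

lemma rho_sums2: "(\<Sum>k<2*m+2. rho k * g k) = (-1)^m / 2 \<and> (\<Sum>k<2*m+2. rho k * (real k + 1)) = (-1)^m * (real m + 1)"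
proof -
  have e: "2 * m + 2 = Suc (2 * m + 1)" by simp
  have r1: "rho (2 * m + 1) = 0" by (simp add: rho_def)
  show ?thesis unfolding e sum.lessThan_Suc using rho_sums[of m] r1 by simp
qed

lemma Pprod: "(\<Prod>i<Suc m. 1 / (2::real) ^ i) * (\<Prod>j<m. - 1 / 2 ^ (j + 2)) * 2 ^ ((Suc m)^2) = 2 * (-1) ^ m"
proof (induction m)
  case 0
  then show ?case by simp
next
  case (Suc m)
  have e: "(Suc (Suc m))^2 = (Suc m)^2 + Suc m + (m + 2)" by (simp add: power2_eq_square)
  have "(\<Prod>i<Suc (Suc m). 1 / (2::real) ^ i) * (\<Prod>j<Suc m. - 1 / 2 ^ (j + 2)) * 2 ^ ((Suc (Suc m))^2)
      = ((\<Prod>i<Suc m. 1 / (2::real) ^ i) * (\<Prod>j<m. - 1 / 2 ^ (j + 2)) * 2 ^ ((Suc m)^2))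
        * ((1 / 2 ^ Suc m) * 2 ^ Suc m) * ((- 1 / 2 ^ (m + 2)) * 2 ^ (m + 2))"
    unfolding e power_add by (simp only: prod.lessThan_Suc mult_ac)
  also have "\<dots> = 2 * (-1) ^ Suc m" unfolding Suc by simp
  finally show ?case .
qed

lemma neg1_parity: "even a = even b \<Longrightarrow> (-1::real) ^ a = (-1) ^ b"
  by (cases "even a") auto

theorem mainTheorem10:
  fixes n :: nat
  assumes "n \<ge> 1"
  shows "det (mat n n (\<lambda>(i, j). [: cb i j, 1 :] :: real poly))
       = [: (-1) ^ (n choose 2) / 2 ^ (n^2) :]
         * [: 1, 2 * real (nat \<lceil>real n / 2\<rceil>) :]"
proof -
  obtain m' where n: "n = Suc m'" using assms by (cases n) auto
  have car: "Mm n \<in> carrier_mat n n" "Uc n \<in> carrier_mat n n" "Sd n \<in> carrier_mat n n"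
    "Bt n \<in> carrier_mat n n" "Wm n \<in> carrier_mat n n" "Em n \<in> carrier_mat n n"
    by (simp_all add: Mm_def Uc_def Sd_def Bt_def Wm_def Em_def)
  have "det (Mm n) = det (Mm n * Uc n)" using det_mult[OF car(1,2)] det_Uc by simp
  also have "\<dots> = det (Sd n) * det (Wm n)" unfolding L1
    using det_mult[OF car(3) mult_carrier_mat[OF car(4,5)]] det_mult[OF car(4,5)] det_Bt by simp
  also have "det (Wm n) = det (Wp n)" using det_mult[OF car(6,5)] det_Em L2 by simp
  finally have D: "det (Mm n) = [: \<Prod>i<n. 1 / 2 ^ i :] * (dd n * [: \<Prod>j<m'. - 1 / 2 ^ (j + 2) :])"
    unfolding det_Sd det_Wp[OF n] .
  obtain m where m: "m' = 2 * m \<or> m' = 2 * m + 1" by (metis evenE oddE)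
  have ddn: "dd n = [: (-1)^m / 2, (-1)^m * (real m + 1) :]"
    using m rho_sums[of m] rho_sums2[of m] unfolding dd_def n by (auto simp: add_ac)
  have ce: "nat \<lceil>real n / 2\<rceil> = m + 1"
  proof -
    have "nat \<lceil>real (m' + 1) / 2\<rceil> = m' div 2 + 1" by (rule ceil_half)
    then show ?thesis using m n by auto
  qed
  define P where "P = (\<Prod>i<n. 1 / (2::real) ^ i) * (\<Prod>j<m'. - 1 / 2 ^ (j + 2))"
  have P: "P = 2 * (-1) ^ m' / 2 ^ (n^2)" using Pprod[of m'] unfolding P_def n
    by (simp add: field_simps)
  have sg: "(-1::real) ^ (n choose 2) = (-1) ^ (m' + m)"
  proof (rule neg1_parity)
    have c: "n choose 2 = (m' + 1) * m' div 2" unfolding choose_two n by simp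
    show "even (n choose 2) = even (m' + m)"
    proof (cases "m' = 2 * m")
      case True
      then have "n choose 2 = (2 * m + 1) * m" unfolding c by simp
      then show ?thesis using True by simp
    next
      case False
      then have mm: "m' = 2 * m + 1" using m by simp
      have "(m' + 1) * m' = 2 * ((m + 1) * (2 * m + 1))" unfolding mm by (simp add: algebra_simps)
      then have "n choose 2 = (m + 1) * (2 * m + 1)" unfolding c by simp
      then show ?thesis using mm by simp
    qed
  qed
  have "det (mat n n (\<lambda>(i, j). [: cb i j, 1 :] :: real poly)) = det (Mm n)" by (simp add: Mm_def)
  also have "\<dots> = [: P * ((-1)^m / 2), P * ((-1)^m * (real m + 1)) :]"
    unfolding D ddn P_def by (simp add: mult_ac)
  also have "\<dots> = [: (-1) ^ (n choose 2) / 2 ^ (n^2) :] * [: 1, 2 * real (nat \<lceil>real n / 2\<rceil>) :]"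
    unfolding ce sg P by (simp add: power_add field_simps)
  finally show ?thesis .
qed

end
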